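(* Let $X$ and $Y$ be chains with $X$ bounded, let $F\colon X^*\to Y$ be a standard function, and let $a,b\in X$ with $a\leqslant b$. The following are equivalent. (i) (a) $F$ is preassociative and unarily quasi-range-idempotent; (b) there is a strictly increasing function $f\colon[a,b]\to Y$ with convex range such that $F_1(x)=f(\mathrm{med}(a,x,b))$ for all $x\in X$; (c) $F_2(x,x)=F_1(x)$ for every $x\in X$; (d) $F_2$ is nondecreasing in each argument; (e) the sets $\{F_2(x,z):x\in X\}$ and $\{F_2(z,x):x\in X\}$ are convex for every $z\in X$. (ii) (a) $F$ is preassociative and unarily quasi-range-idempotent; (b) there is a strictly increasing function $f\colon[a,b]\to Y$ with convex range such that $F_1(x)=f(\mathrm{med}(a,x,b))$ for all $x\in X$; (c) for every integer $n\geqslant 2$, $F_n(x,\ldots,x)=F_1(x)$ for every $x\in X$; (d) for every integer $n\geqslant 2$, $F_n$ is nondecreasing in each argument; (e) for every integer $n\geqslant 2$, every $0\leqslant i\leqslant n-1$, every $\mathbf{y}\in X^i$ and $\mathbf{z}\in X^{n-1-i}$, the set $\{F_n(\mathbf{y},x,\mathbf{z}):x\in X\}$ is convex. (iii) There exist $c,d\in[a,b]$ and a strictly increasing function $f\colon[a,b]\to Y$ with convex range such that for every $n\geqslant 1$, $$F_n(x_1,\ldots,x_n)=f\Big(\mathrm{med}\Big(a,\,(c\wedge x_1)\vee\mathrm{med}\Big(\bigwedge_{i=1}^n x_i,\,c\wedge d,\,\bigvee_{i=1}^n x_i\Big)\vee(d\wedge x_n),\,b\Big)\Big).$$ In this case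 $f=F_1|_{[a,b]}$.
   Context: $X^*=\bigcup_{n\geqslant 0}X^n$ is the set of finite tuples over $X$, $X^0=\{\varepsilon\}$ with $\varepsilon$ the empty tuple; $F(\mathbf{x},\mathbf{y})$ denotes $F$ applied to the concatenation, concatenation with $\varepsilon$ leaving tuples unchanged. $F_n=F|_{X^n}$, $F^{\flat}=F|_{X^*\setminus\{\varepsilon\}}$. $F$ is standard if $F(\mathbf{x})=F(\varepsilon)$ only for $\mathbf{x}=\varepsilon$. $F$ is preassociative if for all tuples $\mathbf{x},\mathbf{y},\mathbf{y}',\mathbf{z}$, $F(\mathbf{y})=F(\mathbf{y}')$ implies $F(\mathbf{x},\mathbf{y},\mathbf{z})=F(\mathbf{x},\mathbf{y}',\mathbf{z})$. $F$ is unarily quasi-range-idempotent if $\mathrm{ran}(F_1)=\mathrm{ran}(F^{\flat})$. In the chain $X$, $\wedge,\vee$ denote min and max, $[a,b]=\{x\in X: a\leqslant x\leqslant b\}$, and $\mathrm{med}(x,y,z)=(x\vee y)\wedge(y\vee z)\wedge(z\vee x)$. A subset $S$ of a chain is convex if $s,s'\in S$ and $s<t<s'$ imply $t\in S$. *)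

theory Defs
  imports Main
begin

text \<open>Tuples over X are lists; the empty tuple is []. F_n is F restricted to lists of length n.\<close>

definition med :: "'a::linorder \<Rightarrow> 'a \<Rightarrow> 'a \<Rightarrow> 'a" where
  "med x y z = min (min (max x y) (max y z)) (max z x)"

definition convex_chain :: "'a::linorder set \<Rightarrow> bool" where
  "convex_chain S \<longleftrightarrow> (\<forall>s\<in>S. \<forall>s'\<in>S. \<forall>t. s < t \<and> t < s' \<longrightarrow> t \<in> S)"

definition standard :: "('a list \<Rightarrow> 'b) \<Rightarrow> bool" where
  "standard F \<longleftrightarrow> (\<forall>xs. F xs = F [] \<longrightarrow> xs = [])"

definition preassociative :: "('a list \<Rightarrow> 'b) \<Rightarrow> bool" where
  "preassociative F \<longleftrightarrow>
     (\<forall>x y y' z. F y = F y' \<longrightarrow> F (x @ y @ z) = F (x @ y' @ z))"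

definition unarily_quasi_range_idempotent :: "('a list \<Rightarrow> 'b) \<Rightarrow> bool" where
  "unarily_quasi_range_idempotent F \<longleftrightarrow>
     range (\<lambda>x. F [x]) = F ` {xs. xs \<noteq> []}"

end

theory Submission
  imports Defs
begin
lemma thr: "(\<And>t::'a::linorder. t \<le> u \<longleftrightarrow> t \<le> v) \<Longrightarrow> u = v" by (meson antisym order_refl)

definition GG :: "'a::linorder \<Rightarrow> 'a \<Rightarrow> 'a \<Rightarrow> 'a \<Rightarrow> 'a" where
 "GG c d p q = max (min p c) (min q (max p d))"

definition KK :: "'a::linorder \<Rightarrow> 'a \<Rightarrow> 'a \<Rightarrow> 'a \<Rightarrow> 'a list \<Rightarrow> 'a" where
 "KK a b c d xs = med a (max (max (min c (hd xs))
                                         (med (Min (set xs)) (min c d) (Max (set xs))))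
                                    (min d (last xs))) b"

definition lp :: "('a::linorder \<Rightarrow> 'a) \<Rightarrow> bool" where
  "lp g \<longleftrightarrow> (\<exists>l u. \<forall>x. g x = max l (min x u))"

lemma GG_assoc: "GG c d (GG c d p q) r = GG c d p (GG c d q r)"
  unfolding GG_def by (rule thr) (simp only: le_max_iff_disj min.bounded_iff, argo)

lemma key_id:
  fixes a b c d h m M l y :: "'a::linorder"
  assumes "m \<le> h" "h \<le> M" "m \<le> l" "l \<le> M" "a \<le> c" "c \<le> b" "a \<le> d" "d \<le> b"
  shows "med a (max (max (min c h) (med (min y m) (min c d) (max y M))) (min d y)) b
       = GG c d (med a (max (max (min c h) (med m (min c d) M)) (min d l)) b) (med a y b)"
proof (rule thr)
  fix t
  have i: "t \<le> m \<Longrightarrow> t \<le> h" "t \<le> h \<Longrightarrow> t \<le> M" "t \<le> m \<Longrightarrow> t \<le> l" "t \<le> l \<Longrightarrow> t \<le> M"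
    "t \<le> a \<Longrightarrow> t \<le> c" "t \<le> c \<Longrightarrow> t \<le> b" "t \<le> a \<Longrightarrow> t \<le> d" "t \<le> d \<Longrightarrow> t \<le> b"
    using assms order_trans by blast+
  show "t \<le> med a (max (max (min c h) (med (min y m) (min c d) (max y M))) (min d y)) b
       \<longleftrightarrow> t \<le> GG c d (med a (max (max (min c h) (med m (min c d) M)) (min d l)) b) (med a y b)"
    unfolding GG_def med_def using i by (simp only: le_max_iff_disj min.bounded_iff) argo
qed

lemma med_in: "(a::'a::linorder) \<le> b \<Longrightarrow> med a x b \<in> {a..b}"
  by (auto simp: med_def min_def max_def)

lemma med_id: "(p::'a::linorder) \<in> {a..b} \<Longrightarrow> med a p b = p"
  by (auto simp: med_def)

lemma KK_snoc:
  assumes "xs \<noteq> []" "a \<le> c" "c \<le> b" "a \<le> d" "d \<le> b"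
  shows "KK a b c d (xs @ [y]) = GG c d (KK a b c d xs) (med a y b)"
proof -
  have fin: "finite (set xs)" "set xs \<noteq> {}" using assms(1) by auto
  have h: "hd xs \<in> set xs" "last xs \<in> set xs" using assms(1) by auto
  have "Min (set xs) \<le> hd xs" "hd xs \<le> Max (set xs)" "Min (set xs) \<le> last xs" "last xs \<le> Max (set xs)"
    using h fin by auto
  note k = key_id[OF this assms(2-5), of y]
  show ?thesis unfolding KK_def using assms(1) fin
    by (simp add: Min_insert Max_insert k[unfolded KK_def])
qed

lemma KK_single: "KK a b c d [x] = med a x b"
  unfolding KK_def by (rule arg_cong[where f="\<lambda>z. med a z b"]) (rule thr, simp only: list.sel last.simps if_True set_simps Min_singleton Max_singleton med_def le_max_iff_disj min.bounded_iff, argo)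

lemma KK_in: "a \<le> b \<Longrightarrow> KK a b c d xs \<in> {a..b}"
  unfolding KK_def by (rule med_in)

lemma KK_append:
  assumes "xs \<noteq> []" "ys \<noteq> []" "a \<le> c" "c \<le> b" "a \<le> d" "d \<le> b"
  shows "KK a b c d (xs @ ys) = GG c d (KK a b c d xs) (KK a b c d ys)"
  using assms(2)
proof (induction ys rule: rev_induct)
  case Nil
  then show ?case by simp
next
  case (snoc y zs)
  show ?case
  proof (cases "zs = []")
    case True
    then show ?thesis using KK_snoc[OF assms(1) assms(3-6)] by (simp add: KK_single)
  next
    case False
    have "KK a b c d (xs @ zs @ [y]) = KK a b c d ((xs @ zs) @ [y])" by simp
    also have "\<dots> = GG c d (KK a b c d (xs @ zs)) (med a y b)"
      using KK_snoc[OF _ assms(3-6), of "xs@zs" y] assms(1) by simp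
    also have "\<dots> = GG c d (GG c d (KK a b c d xs) (KK a b c d zs)) (med a y b)"
      using snoc.IH False by simp
    also have "\<dots> = GG c d (KK a b c d xs) (GG c d (KK a b c d zs) (med a y b))"
      by (rule GG_assoc)
    also have "\<dots> = GG c d (KK a b c d xs) (KK a b c d (zs @ [y]))"
      using KK_snoc[OF False assms(3-6)] by simp
    finally show ?thesis by simp
  qed
qed

lemma GG_mono: "p \<le> p' \<Longrightarrow> q \<le> q' \<Longrightarrow> GG c d p q \<le> GG c d p' (q'::'a::linorder)"
  unfolding GG_def by (intro max.mono min.mono) auto

lemma med_mono: "x \<le> x' \<Longrightarrow> med a x b \<le> med a (x'::'a::linorder) b"
  unfolding med_def by (intro max.mono min.mono) auto

lemma lp_comp: assumes "lp g" "lp h" shows "lp (\<lambda>x. g (h x))"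
proof -
  obtain l u where g: "\<And>x. g x = max l (min x u)" using assms(1) unfolding lp_def by blast
  obtain l' u' where h: "\<And>x. h x = max l' (min x u')" using assms(2) unfolding lp_def by blast
  have "\<forall>x. g (h x) = max (max l (min l' u)) (min x (min u' u))"
    unfolding g h by (intro allI, rule thr) (simp only: le_max_iff_disj min.bounded_iff, argo)
  then show ?thesis unfolding lp_def by blast
qed

lemma lp_med: assumes "(a::'a::linorder) \<le> b" shows "lp (\<lambda>x. med a x b)"
proof -
  have "\<forall>x. med a x b = max a (min x b)"
  proof (intro allI, rule thr)
    fix x t
    have "t \<le> a \<Longrightarrow> t \<le> b" using assms order_trans by blast
    then show "t \<le> med a x b \<longleftrightarrow> t \<le> max a (min x b)"
      unfolding med_def by (simp only: le_max_iff_disj min.bounded_iff) argo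
  qed
  then show ?thesis unfolding lp_def by blast
qed

lemma lp_GG1: "lp (\<lambda>p. GG c d p (q::'a::linorder))"
proof -
  have "\<forall>p. GG c d p q = max (min q d) (min p (max c q))"
    unfolding GG_def by (intro allI, rule thr) (simp only: le_max_iff_disj min.bounded_iff, argo)
  then show ?thesis unfolding lp_def by blast
qed

lemma lp_GG2: "lp (\<lambda>q. GG c d (p::'a::linorder) q)"
  unfolding lp_def GG_def by blast

lemma lp_conv: assumes "lp g" shows "convex_chain (range g)"
proof -
  obtain l u where g: "\<And>x. g x = max l (min x u)" using assms(1) unfolding lp_def by blast
  show ?thesis unfolding convex_chain_def
  proof (intro ballI allI impI)
    fix s s' t assume "s \<in> range g" "s' \<in> range g" and st: "s < t \<and> t < s'"
    then obtain x1 x2 where s: "s = g x1" "s' = g x2" by auto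
    have s1: "s = max l (min x1 u)" "s' = max l (min x2 u)" using s g by simp_all
    have "l < t" using st s1(1) by (metis le_less_trans max.cobounded1)
    moreover have "t < u" using st s1(2) \<open>l < t\<close> by (metis less_max_iff_disj min.strict_boundedE not_less_iff_gr_or_eq)
    ultimately have "g t = t" using g[of t] by (simp add: min.absorb1 max.absorb2)
    then show "t \<in> range g" by (metis rangeI)
  qed
qed

lemma smono_le: "strict_mono_on S f \<Longrightarrow> u \<in> S \<Longrightarrow> v \<in> S \<Longrightarrow> (u::'a::linorder) \<le> v \<Longrightarrow> f u \<le> (f v::'b::linorder)"
proof -
  assume a: "strict_mono_on S f" "u \<in> S" "v \<in> S" "u \<le> v"
  show ?thesis
  proof (cases "u = v")
    case False
    then have "u < v" using a(4) by (simp add: less_le)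
    then show ?thesis using strict_mono_onD[OF a(1-3)] by simp
  qed simp
qed

lemma smono_rev: "strict_mono_on S f \<Longrightarrow> u \<in> S \<Longrightarrow> v \<in> S \<Longrightarrow> f u \<le> (f v::'b::linorder) \<Longrightarrow> u \<le> (v::'a::linorder)"
  by (metis not_le leD strict_mono_onD)

lemma smono_inj: "strict_mono_on S f \<Longrightarrow> u \<in> S \<Longrightarrow> v \<in> S \<Longrightarrow> f u = (f v::'b::linorder) \<Longrightarrow> u = (v::'a::linorder)"
  by (metis antisym order_refl smono_rev)

lemma convD: "convex_chain S \<Longrightarrow> s \<in> S \<Longrightarrow> s' \<in> S \<Longrightarrow> s < t \<Longrightarrow> t < s' \<Longrightarrow> t \<in> S"
  unfolding convex_chain_def by blast

lemma conv_img:
  assumes fm: "strict_mono_on {a..b} f" and fc: "convex_chain (f ` {a..b})"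
    and S: "S \<subseteq> {a..b}" "convex_chain S"
  shows "convex_chain (f ` S)"
  unfolding convex_chain_def
proof (intro ballI allI impI)
  fix s s' t assume "s \<in> f ` S" "s' \<in> f ` S" and st: "s < t \<and> t < s'"
  then obtain u u' where u: "u \<in> S" "u' \<in> S" "s = f u" "s' = f u'" by auto
  have uab: "u \<in> {a..b}" "u' \<in> {a..b}" using u S(1) by auto
  have fu: "f u \<in> f ` {a..b}" "f u' \<in> f ` {a..b}" using uab by auto
  have "t \<in> f ` {a..b}" using convD[OF fc fu] st u(3,4) by simp
  then obtain w where w: "w \<in> {a..b}" "t = f w" by auto
  have "u < w"
  proof (rule ccontr)
    assume "\<not> u < w" then have "w \<le> u" by simp
    then have "f w \<le> f u" using smono_le[OF fm w(1) uab(1)] by simp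
    moreover have "f u < f w" using st u(3) w(2) by simp
    ultimately show False by simp
  qed
  moreover have "w < u'"
  proof (rule ccontr)
    assume "\<not> w < u'" then have "u' \<le> w" by simp
    then have "f u' \<le> f w" using smono_le[OF fm uab(2) w(1)] by simp
    moreover have "f w < f u'" using st u(4) w(2) by simp
    ultimately show False by simp
  qed
  ultimately have "w \<in> S" using convD[OF S(2) u(1,2)] by simp
  then show "t \<in> f ` S" using w by auto
qed

lemma L1:
  fixes F :: "'a::linorder list \<Rightarrow> 'b::linorder" and a b :: 'a and f :: "'a \<Rightarrow> 'b"
  assumes ab: "a \<le> b"
    and pa: "preassociative F" and uq: "unarily_quasi_range_idempotent F"
    and fm: "strict_mono_on {a..b} f" and fc: "convex_chain (f ` {a..b})"
    and F1: "\<forall>x. F [x] = f (med a x b)"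
    and id2: "\<forall>x. F [x, x] = F [x]"
    and m1: "\<forall>x x' y. x \<le> x' \<longrightarrow> F [x, y] \<le> F [x', y]"
    and m2: "\<forall>x y y'. y \<le> y' \<longrightarrow> F [x, y] \<le> F [x, y']"
    and cv: "\<forall>z. convex_chain {F [x, z] | x. True} \<and> convex_chain {F [z, x] | x. True}"
  shows "\<exists>c\<in>{a..b}. \<exists>d\<in>{a..b}. \<forall>xs. xs \<noteq> [] \<longrightarrow> F xs = f (KK a b c d xs)"
proof -
  define cl where "cl x = med a x b" for x
  have cl_in: "cl x \<in> {a..b}" for x using med_in[OF ab] cl_def by simp
  have cl_id: "p \<in> {a..b} \<Longrightarrow> cl p = p" for p using med_id cl_def by simp
  have Ft: "t \<in> {a..b} \<Longrightarrow> F [t] = f t" for t using F1 cl_id cl_def by simp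
  have PA: "F y = F y' \<Longrightarrow> F (x @ y @ z) = F (x @ y' @ z)" for x y y' z
    using pa unfolding preassociative_def by blast
  have "\<exists>t\<in>{a..b}. F [x, y] = f t" for x y
  proof -
    have "F [x,y] \<in> F ` {xs. xs \<noteq> []}" by auto
    then obtain u where "F [x,y] = F [u]" using uq unfolding unarily_quasi_range_idempotent_def by auto
    then show ?thesis using F1 cl_in cl_def by metis
  qed
  then obtain G where G: "\<And>x y. G x y \<in> {a..b}" "\<And>x y. F [x, y] = f (G x y)" by metis
  have inj: "u \<in> {a..b} \<Longrightarrow> v \<in> {a..b} \<Longrightarrow> f u = f v \<Longrightarrow> u = v" for u v
    using smono_inj[OF fm] by blast
  have FG: "F [x, y] = F [G x y]" for x y using G Ft by simp
  have Fcl: "F [x] = F [cl x]" for x using F1 cl_def cl_in cl_id by simp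
  have G_cl: "G x y = G (cl x) (cl y)" for x y
  proof -
    have "F ([] @ [x] @ [y]) = F ([] @ [cl x] @ [y])" by (rule PA) (rule Fcl)
    moreover have "F ([cl x] @ [y] @ []) = F ([cl x] @ [cl y] @ [])" by (rule PA) (rule Fcl)
    ultimately have "f (G x y) = f (G (cl x) (cl y))" using G(2) by simp
    then show ?thesis using inj G(1) by blast
  qed
  have assoc: "G (G x y) z = G x (G y z)" for x y z
  proof -
    have "F ([] @ [G x y] @ [z]) = F ([] @ [x, y] @ [z])" by (rule PA) (simp add: FG)
    moreover have "F ([x] @ [y, z] @ []) = F ([x] @ [G y z] @ [])" by (rule PA) (simp add: FG)
    ultimately have "f (G (G x y) z) = f (G x (G y z))" using G(2) by simp
    then show ?thesis using inj G(1) by blast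
  qed
  have idem: "G x x = cl x" for x
    using G(2)[of x x] id2 F1 cl_def inj G(1) cl_in by metis
  have mono1: "x \<le> x' \<Longrightarrow> G x y \<le> G x' y" for x x' y
    using m1 G smono_rev[OF fm] by metis
  have mono2: "y \<le> y' \<Longrightarrow> G x y \<le> G x y'" for x y y'
    using m2 G smono_rev[OF fm] by metis
  have fless: "u \<in> {a..b} \<Longrightarrow> v \<in> {a..b} \<Longrightarrow> u < v \<Longrightarrow> f u < f v" for u v
    using fm strict_mono_onD by blast
  have cv1: "convex_chain {G x z | x. True}" for z
    unfolding convex_chain_def
  proof (intro ballI allI impI)
    fix s s' t assume "s \<in> {G x z | x. True}" "s' \<in> {G x z | x. True}" and st: "s < t \<and> t < s'"
    then obtain x1 x2 where s: "s = G x1 z" "s' = G x2 z" by auto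
    have t: "t \<in> {a..b}" using G(1)[of x1 z] G(1)[of x2 z] s st by auto
    have "f s < f t" "f t < f s'" using fless t st s G(1) by auto
    moreover have "f s \<in> {F [x, z] | x. True}" "f s' \<in> {F [x, z] | x. True}" using s G(2) by auto
    ultimately have "f t \<in> {F [x, z] | x. True}" using cv unfolding convex_chain_def by blast
    then obtain x where "f t = f (G x z)" using G(2) by auto
    then have "t = G x z" using inj t G(1) by blast
    then show "t \<in> {G x z | x. True}" by auto
  qed
  have cv2: "convex_chain {G z x | x. True}" for z
    unfolding convex_chain_def
  proof (intro ballI allI impI)
    fix s s' t assume "s \<in> {G z x | x. True}" "s' \<in> {G z x | x. True}" and st: "s < t \<and> t < s'"
    then obtain x1 x2 where s: "s = G z x1" "s' = G z x2" by auto
    have t: "t \<in> {a..b}" using G(1)[of z x1] G(1)[of z x2] s st by auto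
    have "f s < f t" "f t < f s'" using fless t st s G(1) by auto
    moreover have "f s \<in> {F [z, x] | x. True}" "f s' \<in> {F [z, x] | x. True}" using s G(2) by auto
    ultimately have "f t \<in> {F [z, x] | x. True}" using cv unfolding convex_chain_def by blast
    then obtain x where "f t = f (G z x)" using G(2) by auto
    then have "t = G z x" using inj t G(1) by blast
    then show "t \<in> {G z x | x. True}" by auto
  qed
  have cla: "cl a = a" "cl b = b" using cl_id ab by auto
  define c where "c = G b a"
  define d where "d = G a b"
  have cd: "c \<in> {a..b}" "d \<in> {a..b}" using G(1) c_def d_def by auto
  have inconv: "convex_chain S \<Longrightarrow> s \<in> S \<Longrightarrow> s' \<in> S \<Longrightarrow> s \<le> p \<Longrightarrow> p \<le> s' \<Longrightarrow> p \<in> S" for S s s' p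
    unfolding convex_chain_def by (metis order_le_less)
  have Ga: "G p a = min p c" if p: "p \<in> {a..b}" for p
  proof -
    let ?R = "{G x a | x. True}"
    have fix1: "s \<in> ?R \<Longrightarrow> G s a = s" for s using assoc idem cla by auto
    have "a \<in> ?R" using idem cla by (metis (mono_tags, lifting) mem_Collect_eq)
    moreover have "c \<in> ?R" using c_def by auto
    show ?thesis
    proof (cases "p \<le> c")
      case True
      then have "p \<in> ?R" using inconv[OF cv1 \<open>a \<in> ?R\<close> \<open>c \<in> ?R\<close>] p by auto
      then have "G p a = p" by (rule fix1)
      then show ?thesis using True by (simp add: min.absorb1)
    next
      case False
      then have cp: "c \<le> p" by simp
      have "G c a \<le> G p a" using cp by (rule mono1)
      moreover have "G p a \<le> G b a" using p by (intro mono1) simp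
      moreover have "G c a = c" using \<open>c \<in> ?R\<close> by (rule fix1)
      ultimately have "G p a = c" using c_def by (metis antisym)
      then show ?thesis using cp by (simp add: min.absorb2)
    qed
  qed
  have Gb: "G p b = max p d" if p: "p \<in> {a..b}" for p
  proof -
    let ?R = "{G x b | x. True}"
    have fix1: "s \<in> ?R \<Longrightarrow> G s b = s" for s using assoc idem cla by auto
    have "b \<in> ?R" using idem cla by (metis (mono_tags, lifting) mem_Collect_eq)
    moreover have "d \<in> ?R" using d_def by auto
    show ?thesis
    proof (cases "d \<le> p")
      case True
      then have "p \<in> ?R" using inconv[OF cv1 \<open>d \<in> ?R\<close> \<open>b \<in> ?R\<close>] p by auto
      then have "G p b = p" by (rule fix1)
      then show ?thesis using True by (simp add: max.absorb1)
    next
      case False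
      then have dp: "p \<le> d" by simp
      have "G p b \<le> G d b" using dp by (rule mono1)
      moreover have "G a b \<le> G p b" using p by (intro mono1) simp
      moreover have "G d b = d" using \<open>d \<in> ?R\<close> by (rule fix1)
      ultimately have "G p b = d" using d_def by (metis antisym)
      then show ?thesis using dp by (simp add: max.absorb2)
    qed
  qed
  have Gzy: "G z y = GG c d z y" if z: "z \<in> {a..b}" and y: "y \<in> {a..b}" for z y
  proof -
    let ?R = "{G z x | x. True}"
    have fix1: "s \<in> ?R \<Longrightarrow> G z s = s" for s
    proof -
      assume "s \<in> ?R" then obtain x where "s = G z x" by auto
      then show ?thesis using assoc idem cl_id z by metis
    qed
    have lo: "min z c \<in> ?R" using Ga[OF z] by (metis (mono_tags, lifting) mem_Collect_eq)
    have hi: "max z d \<in> ?R" using Gb[OF z] by (metis (mono_tags, lifting) mem_Collect_eq)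
    show ?thesis
    proof (cases "y < min z c")
      case True
      have "G z y \<le> G z (min z c)" using less_imp_le[OF True] by (rule mono2)
      moreover have "G z a \<le> G z y" using y by (intro mono2) simp
      moreover have "G z (min z c) = min z c" by (rule fix1[OF lo])
      ultimately have "G z y = min z c" using Ga[OF z] by (metis antisym)
      then show ?thesis unfolding GG_def using True by (auto simp: min_def max_def)
    next
      case False
      show ?thesis
      proof (cases "max z d < y")
        case True
        have "G z (max z d) \<le> G z y" using less_imp_le[OF True] by (rule mono2)
        moreover have "G z y \<le> G z b" using y by (intro mono2) simp
        moreover have "G z (max z d) = max z d" by (rule fix1[OF hi])
        ultimately have "G z y = max z d" using Gb[OF z] by (metis antisym)
        then show ?thesis unfolding GG_def using True by (auto simp: min_def max_def)
      next
        case False2: False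
        have l1: "min z c \<le> y" using False by (simp only: not_less)
        have l2: "y \<le> max z d" using False2 by (simp only: not_less)
        have "y \<in> ?R" by (rule inconv[OF cv2 lo hi l1 l2])
        then have "G z y = y" using fix1 by blast
        then show ?thesis unfolding GG_def using False False2 by (auto simp: min_def max_def)
      qed
    qed
  qed
  have main: "xs \<noteq> [] \<Longrightarrow> F xs = f (KK a b c d xs)" for xs
  proof (induction xs rule: rev_induct)
    case Nil then show ?case by simp
  next
    case (snoc y xs)
    show ?case
    proof (cases "xs = []")
      case True
      then show ?thesis using F1 by (simp add: KK_single)
    next
      case False
      have k: "KK a b c d xs \<in> {a..b}" using KK_in[OF ab] .
      have "F xs = F [KK a b c d xs]" using snoc.IH False Ft k by simp
      then have "F ([] @ xs @ [y]) = F ([] @ [KK a b c d xs] @ [y])" by (rule PA)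
      then have "F (xs @ [y]) = f (G (KK a b c d xs) y)" using G(2) by simp
      also have "\<dots> = f (GG c d (KK a b c d xs) (cl y))"
        using G_cl[of "KK a b c d xs" y] cl_id[OF k] Gzy[OF k cl_in] by simp
      also have "\<dots> = f (KK a b c d (xs @ [y]))"
        using KK_snoc[OF False] cd cl_def by simp
      finally show ?thesis .
    qed
  qed
  show ?thesis using main cd by blast
qed

lemma L2:
  fixes F :: "'a::linorder list \<Rightarrow> 'b::linorder" and a b c d :: 'a and f :: "'a \<Rightarrow> 'b"
  assumes ab: "a \<le> b" and std: "standard F"
    and cd: "c \<in> {a..b}" "d \<in> {a..b}"
    and fm: "strict_mono_on {a..b} f" and fc: "convex_chain (f ` {a..b})"
    and FK: "\<forall>xs. xs \<noteq> [] \<longrightarrow> F xs = f (KK a b c d xs)"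
  shows "preassociative F \<and> unarily_quasi_range_idempotent F
      \<and> (\<exists>f::'a \<Rightarrow> 'b. strict_mono_on {a..b} f \<and> convex_chain (f ` {a..b})
            \<and> (\<forall>x. F [x] = f (med a x b)))
      \<and> (\<forall>n::nat. n \<ge> 2 \<longrightarrow> (\<forall>x. F (replicate n x) = F [x]))
      \<and> (\<forall>n::nat. n \<ge> 2 \<longrightarrow> (\<forall>ys zs x x'.
            length ys + 1 + length zs = n \<and> x \<le> x' \<longrightarrow> F (ys @ [x] @ zs) \<le> F (ys @ [x'] @ zs)))
      \<and> (\<forall>n::nat. n \<ge> 2 \<longrightarrow> (\<forall>ys zs.
            length ys + 1 + length zs = n \<longrightarrow> convex_chain {F (ys @ [x] @ zs) | x. True}))"
proof -
  have c4: "a \<le> c" "c \<le> b" "a \<le> d" "d \<le> b" using cd by auto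
  note KA = KK_append[OF _ _ c4]
  note KS = KK_single[of a b c d]
  have KC: "zs \<noteq> [] \<Longrightarrow> KK a b c d (x # zs) = GG c d (med a x b) (KK a b c d zs)" for x zs
    using KA[of "[x]" zs] KS by simp
  have F1: "F [x] = f (med a x b)" for x using FK KS by simp
  have Ft: "t \<in> {a..b} \<Longrightarrow> F [t] = f t" for t using F1 med_id[of t a b] by simp
  have pa: "preassociative F" unfolding preassociative_def
  proof (intro allI impI)
    fix x y y' z assume e: "F y = F y'"
    show "F (x @ y @ z) = F (x @ y' @ z)"
    proof (cases "y = [] \<or> y' = []")
      case True
      then have "y = y'" using e std unfolding standard_def by metis
      then show ?thesis by simp
    next
      case False
      then have "f (KK a b c d y) = f (KK a b c d y')" using e FK by simp
      then have k: "KK a b c d y = KK a b c d y'" using smono_inj[OF fm] KK_in[OF ab] by blast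
      have "KK a b c d (x @ y @ z) = KK a b c d (x @ y' @ z)"
        using False k by (cases "x = []"; cases "z = []") (simp_all add: KA)
      then show ?thesis using FK False by simp
    qed
  qed
  have uq: "unarily_quasi_range_idempotent F" unfolding unarily_quasi_range_idempotent_def
  proof
    show "range (\<lambda>x. F [x]) \<subseteq> F ` {xs. xs \<noteq> []}" by auto
    show "F ` {xs. xs \<noteq> []} \<subseteq> range (\<lambda>x. F [x])"
    proof
      fix v assume "v \<in> F ` {xs. xs \<noteq> []}"
      then obtain xs where "xs \<noteq> []" "v = F xs" by auto
      then have "v = F [KK a b c d xs]" using FK Ft KK_in[OF ab] by simp
      then show "v \<in> range (\<lambda>x. F [x])" by auto
    qed
  qed
  have rep: "F (replicate n x) = F [x]" if "n \<ge> 2" for n x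
  proof -
    have "replicate n x \<noteq> []" "set (replicate n x) = {x}" "hd (replicate n x) = x" "last (replicate n x) = x"
      using that by auto
    then show ?thesis using FK unfolding KK_def by simp
  qed
  have mono: "F (ys @ [x] @ zs) \<le> F (ys @ [x'] @ zs)" if "x \<le> x'" for ys zs x x'
  proof -
    have m: "med a x b \<le> med a x' b" using med_mono that .
    have "KK a b c d (ys @ [x] @ zs) \<le> KK a b c d (ys @ [x'] @ zs)"
      using m by (cases "ys = []"; cases "zs = []") (simp_all add: KA KC KS GG_mono)
    then show ?thesis using FK smono_le[OF fm KK_in[OF ab] KK_in[OF ab]] by simp
  qed
  have conv: "convex_chain {F (ys @ [x] @ zs) | x. True}" if "ys \<noteq> [] \<or> zs \<noteq> []" for ys zs
  proof -
    define \<phi> where "\<phi> x = KK a b c d (ys @ [x] @ zs)" for x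
    have "lp \<phi>"
      using that
    proof (cases "ys = []"; cases "zs = []")
      assume "ys = []" "zs \<noteq> []"
      then have "\<phi> = (\<lambda>x. GG c d (med a x b) (KK a b c d zs))" unfolding \<phi>_def
        by (simp add: KA KC KS)
      then show "lp \<phi>" using lp_comp[OF lp_GG1 lp_med[OF ab]] by simp
    next
      assume "ys \<noteq> []" "zs = []"
      then have "\<phi> = (\<lambda>x. GG c d (KK a b c d ys) (med a x b))" unfolding \<phi>_def
        by (simp add: KA KC KS)
      then show "lp \<phi>" using lp_comp[OF lp_GG2 lp_med[OF ab]] by simp
    next
      assume "ys \<noteq> []" "zs \<noteq> []"
      then have "\<phi> = (\<lambda>x. GG c d (KK a b c d ys) (GG c d (med a x b) (KK a b c d zs)))" unfolding \<phi>_def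
        by (simp add: KA KC KS)
      then show "lp \<phi>" using lp_comp[OF lp_GG2 lp_comp[OF lp_GG1 lp_med[OF ab]]] by simp
    qed simp
    then have "convex_chain (range \<phi>)" by (rule lp_conv)
    moreover have "range \<phi> \<subseteq> {a..b}" using KK_in[OF ab] \<phi>_def by auto
    ultimately have "convex_chain (f ` range \<phi>)" using conv_img[OF fm fc] by blast
    moreover have "{F (ys @ [x] @ zs) | x. True} = f ` range \<phi>" using FK \<phi>_def by auto
    ultimately show ?thesis by simp
  qed
  have A: "\<exists>f. strict_mono_on {a..b} f \<and> convex_chain (f ` {a..b}) \<and> (\<forall>x. F [x] = f (med a x b))"
    using fm fc F1 by blast
  have B: "\<forall>n::nat. n \<ge> 2 \<longrightarrow> (\<forall>x. F (replicate n x) = F [x])" using rep by blast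
  have C: "\<forall>n::nat. n \<ge> 2 \<longrightarrow> (\<forall>ys zs x x'.
            length ys + 1 + length zs = n \<and> x \<le> x' \<longrightarrow> F (ys @ [x] @ zs) \<le> F (ys @ [x'] @ zs))"
    using mono by blast
  have D: "\<forall>n::nat. n \<ge> 2 \<longrightarrow> (\<forall>ys zs.
            length ys + 1 + length zs = n \<longrightarrow> convex_chain {F (ys @ [x] @ zs) | x. True})"
  proof (intro allI impI)
    fix n :: nat and ys zs :: "'a list"
    assume "2 \<le> n" "length ys + 1 + length zs = n"
    then have "ys \<noteq> [] \<or> zs \<noteq> []" by auto
    then show "convex_chain {F (ys @ [x] @ zs) | x. True}" by (rule conv)
  qed
  show ?thesis by (intro conjI) (rule pa, rule uq, rule A, rule B, rule C, rule D)
qed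

lemma L3:
  fixes F :: "'a::linorder list \<Rightarrow> 'b::linorder"
  assumes rep: "\<forall>n::nat. n \<ge> 2 \<longrightarrow> (\<forall>x. F (replicate n x) = F [x])"
    and mono: "\<forall>n::nat. n \<ge> 2 \<longrightarrow> (\<forall>ys zs x x'.
            length ys + 1 + length zs = n \<and> x \<le> x' \<longrightarrow> F (ys @ [x] @ zs) \<le> F (ys @ [x'] @ zs))"
    and conv: "\<forall>n::nat. n \<ge> 2 \<longrightarrow> (\<forall>ys zs.
            length ys + 1 + length zs = n \<longrightarrow> convex_chain {F (ys @ [x] @ zs) | x. True})"
  shows "(\<forall>x. F [x, x] = F [x])
      \<and> (\<forall>x x' y. x \<le> x' \<longrightarrow> F [x, y] \<le> F [x', y])
      \<and> (\<forall>x y y'. y \<le> y' \<longrightarrow> F [x, y] \<le> F [x, y'])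
      \<and> (\<forall>z. convex_chain {F [x, z] | x. True} \<and> convex_chain {F [z, x] | x. True})"
proof (intro conjI allI impI)
  fix x :: 'a
  have "replicate 2 x = [x, x]" by (simp add: numeral_2_eq_2)
  then show "F [x, x] = F [x]" using rep[rule_format, of 2 x] by simp
next
  fix x x' y :: 'a assume "x \<le> x'"
  then have "F ([] @ [x] @ [y]) \<le> F ([] @ [x'] @ [y])" using mono[rule_format, of 2 "[]" "[y]" x x'] by simp
  then show "F [x, y] \<le> F [x', y]" by simp
next
  fix x y y' :: 'a assume "y \<le> y'"
  then have "F ([x] @ [y] @ []) \<le> F ([x] @ [y'] @ [])" using mono[rule_format, of 2 "[x]" "[]" y y'] by simp
  then show "F [x, y] \<le> F [x, y']" by simp
next
  fix z :: 'a
  have "convex_chain {F ([] @ [x] @ [z]) | x. True}" using conv[rule_format, of 2 "[]" "[z]"] by simp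
  then show "convex_chain {F [x, z] | x. True}" by simp
next
  fix z :: 'a
  have "convex_chain {F ([z] @ [x] @ []) | x. True}" using conv[rule_format, of 2 "[z]" "[]"] by simp
  then show "convex_chain {F [z, x] | x. True}" by simp
qed

theorem theorem5p8:
  fixes F :: "'a::linorder list \<Rightarrow> 'b::linorder" and a b :: 'a
  assumes Xbounded: "\<exists>m M. \<forall>x::'a. m \<le> x \<and> x \<le> M"
    and std: "standard F"
    and ab: "a \<le> b"
  shows
   "((preassociative F \<and> unarily_quasi_range_idempotent F
      \<and> (\<exists>f::'a \<Rightarrow> 'b. strict_mono_on {a..b} f \<and> convex_chain (f ` {a..b})
            \<and> (\<forall>x. F [x] = f (med a x b)))
      \<and> (\<forall>x. F [x, x] = F [x])
      \<and> (\<forall>x x' y. x \<le> x' \<longrightarrow> F [x, y] \<le> F [x', y])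
      \<and> (\<forall>x y y'. y \<le> y' \<longrightarrow> F [x, y] \<le> F [x, y'])
      \<and> (\<forall>z. convex_chain {F [x, z] | x. True} \<and> convex_chain {F [z, x] | x. True}))
    \<longleftrightarrow>
     (preassociative F \<and> unarily_quasi_range_idempotent F
      \<and> (\<exists>f::'a \<Rightarrow> 'b. strict_mono_on {a..b} f \<and> convex_chain (f ` {a..b})
            \<and> (\<forall>x. F [x] = f (med a x b)))
      \<and> (\<forall>n::nat. n \<ge> 2 \<longrightarrow> (\<forall>x. F (replicate n x) = F [x]))
      \<and> (\<forall>n::nat. n \<ge> 2 \<longrightarrow> (\<forall>ys zs x x'.
            length ys + 1 + length zs = n \<and> x \<le> x' \<longrightarrow> F (ys @ [x] @ zs) \<le> F (ys @ [x'] @ zs)))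
      \<and> (\<forall>n::nat. n \<ge> 2 \<longrightarrow> (\<forall>ys zs.
            length ys + 1 + length zs = n \<longrightarrow> convex_chain {F (ys @ [x] @ zs) | x. True}))))
   \<and>
    ((preassociative F \<and> unarily_quasi_range_idempotent F
      \<and> (\<exists>f::'a \<Rightarrow> 'b. strict_mono_on {a..b} f \<and> convex_chain (f ` {a..b})
            \<and> (\<forall>x. F [x] = f (med a x b)))
      \<and> (\<forall>n::nat. n \<ge> 2 \<longrightarrow> (\<forall>x. F (replicate n x) = F [x]))
      \<and> (\<forall>n::nat. n \<ge> 2 \<longrightarrow> (\<forall>ys zs x x'.
            length ys + 1 + length zs = n \<and> x \<le> x' \<longrightarrow> F (ys @ [x] @ zs) \<le> F (ys @ [x'] @ zs)))
      \<and> (\<forall>n::nat. n \<ge> 2 \<longrightarrow> (\<forall>ys zs.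
            length ys + 1 + length zs = n \<longrightarrow> convex_chain {F (ys @ [x] @ zs) | x. True})))
    \<longleftrightarrow>
     (\<exists>c\<in>{a..b}. \<exists>d\<in>{a..b}. \<exists>f::'a \<Rightarrow> 'b.
        strict_mono_on {a..b} f \<and> convex_chain (f ` {a..b})
        \<and> (\<forall>xs. xs \<noteq> [] \<longrightarrow>
              F xs = f (med a (max (max (min c (hd xs))
                                         (med (Min (set xs)) (min c d) (Max (set xs))))
                                    (min d (last xs))) b))))
   \<and>
    (\<forall>c\<in>{a..b}. \<forall>d\<in>{a..b}. \<forall>f::'a \<Rightarrow> 'b.
        strict_mono_on {a..b} f \<and> convex_chain (f ` {a..b})
        \<and> (\<forall>xs. xs \<noteq> [] \<longrightarrow>
              F xs = f (med a (max (max (min c (hd xs))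
                                         (med (Min (set xs)) (min c d) (Max (set xs))))
                                    (min d (last xs))) b))
        \<longrightarrow> (\<forall>x\<in>{a..b}. f x = F [x]))"
  (is "(?A \<longleftrightarrow> ?B) \<and> (?B2 \<longleftrightarrow> ?C) \<and> ?D")
proof -
  have AC: ?C if A: ?A
  proof -
    note A1 = A[THEN conjunct1] and A2 = A[THEN conjunct2, THEN conjunct1]
      and A3 = A[THEN conjunct2, THEN conjunct2, THEN conjunct1]
      and A4 = A[THEN conjunct2, THEN conjunct2, THEN conjunct2, THEN conjunct1]
      and A5 = A[THEN conjunct2, THEN conjunct2, THEN conjunct2, THEN conjunct2, THEN conjunct1]
      and A6 = A[THEN conjunct2, THEN conjunct2, THEN conjunct2, THEN conjunct2, THEN conjunct2, THEN conjunct1]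
      and A7 = A[THEN conjunct2, THEN conjunct2, THEN conjunct2, THEN conjunct2, THEN conjunct2, THEN conjunct2]
    from A3 obtain f where fm: "strict_mono_on {a..b} f" and fc: "convex_chain (f ` {a..b})"
      and F1: "\<forall>x. F [x] = f (med a x b)" by (elim exE conjE)
    have "\<exists>c\<in>{a..b}. \<exists>d\<in>{a..b}. \<forall>xs. xs \<noteq> [] \<longrightarrow> F xs = f (KK a b c d xs)"
      by (rule L1[OF ab A1 A2 fm fc F1 A4 A5 A6 A7])
    then obtain c d where cd: "c \<in> {a..b}" "d \<in> {a..b}"
      and FK: "\<forall>xs. xs \<noteq> [] \<longrightarrow> F xs = f (KK a b c d xs)" by blast
    show ?C
      apply (rule bexI[where x=c])
       apply (rule bexI[where x=d])
        apply (rule exI[where x=f])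
        apply (intro conjI)
          apply (rule fm)
         apply (rule fc)
        apply (rule FK[unfolded KK_def])
       apply (rule cd(2))
      apply (rule cd(1))
      done
  qed
  have CB: ?B if C: ?C
  proof -
    from C obtain c d f where cd: "c \<in> {a..b}" "d \<in> {a..b}" and fm: "strict_mono_on {a..b} f"
      and fc: "convex_chain (f ` {a..b})"
      and FK0: "\<forall>xs. xs \<noteq> [] \<longrightarrow> F xs = f (med a (max (max (min c (hd xs))
                                         (med (Min (set xs)) (min c d) (Max (set xs))))
                                    (min d (last xs))) b)" by (elim bexE exE conjE)
    have FK: "\<forall>xs. xs \<noteq> [] \<longrightarrow> F xs = f (KK a b c d xs)" unfolding KK_def by (rule FK0)
    show ?B by (rule L2[OF ab std cd fm fc FK])
  qed
  have BA: ?A if B: ?B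
  proof -
    have "(\<forall>x. F [x, x] = F [x])
      \<and> (\<forall>x x' y. x \<le> x' \<longrightarrow> F [x, y] \<le> F [x', y])
      \<and> (\<forall>x y y'. y \<le> y' \<longrightarrow> F [x, y] \<le> F [x, y'])
      \<and> (\<forall>z. convex_chain {F [x, z] | x. True} \<and> convex_chain {F [z, x] | x. True})"
      by (rule L3[OF B[THEN conjunct2, THEN conjunct2, THEN conjunct2, THEN conjunct1]
                     B[THEN conjunct2, THEN conjunct2, THEN conjunct2, THEN conjunct2, THEN conjunct1]
                     B[THEN conjunct2, THEN conjunct2, THEN conjunct2, THEN conjunct2, THEN conjunct2]])
    then show ?A
      using B[THEN conjunct1] B[THEN conjunct2, THEN conjunct1] B[THEN conjunct2, THEN conjunct2, THEN conjunct1]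
      by (intro conjI) (elim conjE; assumption)+
  qed
  have D: ?D
  proof (intro ballI allI impI)
    fix c d f x
    assume cd: "c \<in> {a..b}" "d \<in> {a..b}" and H: "strict_mono_on {a..b} f \<and> convex_chain (f ` {a..b})
        \<and> (\<forall>xs. xs \<noteq> [] \<longrightarrow>
              F xs = f (med a (max (max (min c (hd xs))
                                         (med (Min (set xs)) (min c d) (Max (set xs))))
                                    (min d (last xs))) b))"
      and x: "x \<in> {a..b}"
    have "F [x] = f (KK a b c d [x])" using H[THEN conjunct2, THEN conjunct2, rule_format, of "[x]"] unfolding KK_def by simp
    then show "f x = F [x]" using med_id[OF x] by (simp add: KK_single)
  qed
  have 1: "?A = ?B"
  proof (rule iffI)
    assume ?A then show ?B by (rule CB[OF AC])
  next
    assume ?B then show ?A by (rule BA)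
  qed
  have 2: "?B2 = ?C"
  proof (rule iffI)
    assume ?B2 then show ?C by (rule AC[OF BA])
  next
    assume ?C then show ?B2 by (rule CB)
  qed
  show ?thesis by (rule conjI[OF 1 conjI[OF 2 D]])
qed

end
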